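(* Let $\varphi$ be a finite conjunction of literals of the two forms $x\in y$ and $x = y\setminus z$ (with $x,y,z$ set variables), with finite set of variables $\mathrm{Vars}(\varphi)$, and let $\bar n=|\mathrm{Vars}(\varphi)|$. Let $M$ be a set assignment over $\mathrm{Vars}(\varphi)$ satisfying $\varphi$; let $\bar x,\bar y\in\mathrm{Vars}(\varphi)$, let $\overline{M}$ be a set assignment over $\mathrm{Vars}(\varphi)$ satisfying $\varphi$ with $\overline{M}\bar x\neq \overline{M}\bar y$, and let $\mathfrak{t}$ be a set belonging to exactly one of $\overline{M}\bar x$, $\overline{M}\bar y$. Fix a set $\mathfrak{s}$ with $\mathrm{rk}(\mathfrak{s})>\mathrm{rk}(M)$. Define $\mathsf{V}_0=\{u\in\mathrm{Vars}(\varphi)\mid \mathfrak{t}\in\overline{M}u\}$; $\mathsf{V}_n=\{u\in\mathrm{Vars}(\varphi)\mid Mu\cap\{Mw\mid w\in\mathsf{V}_{n-1}\}\neq\emptyset\}$ for $n\ge1$; $M_0v=Mv\cup\{\mathfrak{s}\}$ if $v\in\mathsf{V}_0$ and $M_0v=Mv$ otherwise; for $n\ge1$, $M_nv=M_{n-1}v\cup\{M_{n-1}u\mid u\in\mathsf{V}_{n-1},\ Mu\in Mv\}$ if $v\in\mathsf{V}_n$ and $M_nv=M_{n-1}v$ otherwise. Then the set assignment $M_{\bar n}$ satisfies $\varphi$.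
   Context: A set assignment is a map from a finite set of set variables into the von Neumann universe $\mathcal{V}=\bigcup_\alpha\mathcal{V}_\alpha$, $\mathcal{V}_\alpha=\bigcup_{\beta<\alpha}\mathcal{P}(\mathcal{V}_\beta)$; it satisfies $x\in y$ iff $Mx\in My$ and $x=y\setminus z$ iff $Mx=My\setminus Mz$, and satisfies a conjunction iff it satisfies each conjunct. The rank $\mathrm{rk}(s)$ of a set $s$ is the least ordinal $\alpha$ with $s\subseteq\mathcal{V}_\alpha$, and $\mathrm{rk}(M)=\max\{\mathrm{rk}(Mx)\mid x\in\mathrm{dom}(M)\}$. *)

theory Defs
  imports Main
begin

text \<open>
  An abstract universe of sets: a type 'u whose elements are sets, given by the
  membership function elts (x is the set elts x of its members).  We require
  extensionality (elts injective), well-foundedness of membership (foundation),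
  and closure of sets under adjoining finitely many elements (so that the sets
  M_n v of the lemma exist).  The von Neumann universe satisfies all of this.
\<close>

definition set_universe :: "('u \<Rightarrow> 'u set) \<Rightarrow> bool" where
  "set_universe elts \<longleftrightarrow>
     inj elts \<and>
     wf {(a, b). a \<in> elts b} \<and>
     (\<forall>x F. finite F \<longrightarrow> (\<exists>z. elts z = elts x \<union> F))"

text \<open>The set with members S (used only for sets that exist).\<close>
definition mkset :: "('u \<Rightarrow> 'u set) \<Rightarrow> 'u set \<Rightarrow> 'u" where
  "mkset elts S = inv elts S"

text \<open>Rank comparison: rk(x) \<le> rk(y).  Since rk(x) = sup{rk(a)+1 | a \<in> x},
  rk(x) \<le> rk(y) iff every member a of x has rk(a) \<le> rk(b) for some member b of y.\<close>
inductive rank_le :: "('u \<Rightarrow> 'u set) \<Rightarrow> 'u \<Rightarrow> 'u \<Rightarrow> bool" for elts where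
  "(\<forall>a \<in> elts x. \<exists>b \<in> elts y. rank_le elts a b) \<Longrightarrow> rank_le elts x y"

definition rank_lt :: "('u \<Rightarrow> 'u set) \<Rightarrow> 'u \<Rightarrow> 'u \<Rightarrow> bool" where
  "rank_lt elts x y \<longleftrightarrow> \<not> rank_le elts y x"

datatype 'v lit = Mem 'v 'v | Diff 'v 'v 'v

fun lit_vars :: "'v lit \<Rightarrow> 'v set" where
  "lit_vars (Mem x y) = {x, y}"
| "lit_vars (Diff x y z) = {x, y, z}"

definition Vars :: "'v lit list \<Rightarrow> 'v set" where
  "Vars \<phi> = (\<Union>l \<in> set \<phi>. lit_vars l)"

fun lit_sat :: "('u \<Rightarrow> 'u set) \<Rightarrow> ('v \<Rightarrow> 'u) \<Rightarrow> 'v lit \<Rightarrow> bool" where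
  "lit_sat elts M (Mem x y) \<longleftrightarrow> M x \<in> elts (M y)"
| "lit_sat elts M (Diff x y z) \<longleftrightarrow> elts (M x) = elts (M y) - elts (M z)"

definition sat :: "('u \<Rightarrow> 'u set) \<Rightarrow> ('v \<Rightarrow> 'u) \<Rightarrow> 'v lit list \<Rightarrow> bool" where
  "sat elts M \<phi> \<longleftrightarrow> (\<forall>l \<in> set \<phi>. lit_sat elts M l)"

primrec Vseq :: "('u \<Rightarrow> 'u set) \<Rightarrow> 'v lit list \<Rightarrow> ('v \<Rightarrow> 'u) \<Rightarrow> ('v \<Rightarrow> 'u) \<Rightarrow> 'u \<Rightarrow> nat \<Rightarrow> 'v set" where
  "Vseq elts \<phi> M Mb t 0 = {u \<in> Vars \<phi>. t \<in> elts (Mb u)}"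
| "Vseq elts \<phi> M Mb t (Suc n) =
     {u \<in> Vars \<phi>. elts (M u) \<inter> (M ` Vseq elts \<phi> M Mb t n) \<noteq> {}}"

primrec Mseq :: "('u \<Rightarrow> 'u set) \<Rightarrow> 'v lit list \<Rightarrow> ('v \<Rightarrow> 'u) \<Rightarrow> ('v \<Rightarrow> 'u) \<Rightarrow> 'u \<Rightarrow> 'u \<Rightarrow> nat \<Rightarrow> 'v \<Rightarrow> 'u" where
  "Mseq elts \<phi> M Mb t s 0 = (\<lambda>v.
     if v \<in> Vseq elts \<phi> M Mb t 0 then mkset elts (elts (M v) \<union> {s}) else M v)"
| "Mseq elts \<phi> M Mb t s (Suc n) = (\<lambda>v.
     if v \<in> Vseq elts \<phi> M Mb t (Suc n)
     then mkset elts (elts (Mseq elts \<phi> M Mb t s n v) \<union>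
            {Mseq elts \<phi> M Mb t s n u | u. u \<in> Vseq elts \<phi> M Mb t n \<and> M u \<in> elts (M v)})
     else Mseq elts \<phi> M Mb t s n v)"

end

theory Submission
  imports Defs
begin

lemma mkset_elts:
  assumes "set_universe elts" "finite F"
  shows "elts (mkset elts (elts x \<union> F)) = elts x \<union> F"
proof -
  obtain z where "elts z = elts x \<union> F" using assms unfolding set_universe_def by blast
  then have "elts x \<union> F \<in> range elts" by (metis rangeI)
  then show ?thesis unfolding mkset_def by (simp add: f_inv_into_f)
qed

lemma rank_le_mem:
  assumes wf: "wf {(a, b). a \<in> elts b}"
  shows "a \<in> elts b \<Longrightarrow> rank_le elts a b"
proof (induction a arbitrary: b rule: wf_induct[OF wf])
  case (1 a)
  show ?case
  proof (rule rank_le.intros, intro ballI)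
    fix c assume "c \<in> elts a"
    then have "rank_le elts c a" using 1 by auto
    then show "\<exists>b'\<in>elts b. rank_le elts c b'" using 1(2) by blast
  qed
qed

lemma rank_le_trans:
  "rank_le elts a b \<Longrightarrow> rank_le elts b c \<Longrightarrow> rank_le elts a c"
proof (induction a b arbitrary: c rule: rank_le.induct)
  case (1 x y)
  show ?case
  proof (rule rank_le.intros, intro ballI)
    fix a assume a: "a \<in> elts x"
    then obtain b where b: "b \<in> elts y" "rank_le elts a b"
      "\<And>c. rank_le elts b c \<Longrightarrow> rank_le elts a c" using 1(1) by blast
    from 1(2) b(1) obtain c' where "c' \<in> elts c" "rank_le elts b c'"
      by (cases rule: rank_le.cases) blast
    then show "\<exists>b\<in>elts c. rank_le elts a b" using b(3) by blast
  qed
qed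

lemma trancl_rank_le:
  assumes wf: "wf {(a, b). a \<in> elts b}"
  shows "(a, b) \<in> {(a, b). a \<in> elts b}\<^sup>+ \<Longrightarrow> rank_le elts a b"
proof (induction rule: trancl_induct)
  case (base y) then show ?case using rank_le_mem[OF wf] by auto
next
  case (step y z)
  then have "rank_le elts y z" using rank_le_mem[OF wf] by auto
  then show ?case using step(3) rank_le_trans by metis
qed

lemma finite_Vars: "finite (Vars \<phi>)"
proof -
  have "finite (lit_vars l)" for l :: "'v lit" by (cases l) auto
  then show ?thesis unfolding Vars_def by auto
qed

lemma V_sub: "Vseq elts \<phi> M Mb t n \<subseteq> Vars \<phi>"
  by (cases n) auto

lemma below_psubset:
  assumes "acyclic r" "(a, c) \<in> r" "c \<in> S"
  shows "{b \<in> S. (b, a) \<in> r\<^sup>*} \<subset> {b \<in> S. (b, c) \<in> r\<^sup>*}"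
proof -
  have "{b \<in> S. (b, a) \<in> r\<^sup>*} \<subseteq> {b \<in> S. (b, c) \<in> r\<^sup>*}"
    using assms(2) rtrancl_into_rtrancl by fastforce
  moreover have "c \<notin> {b \<in> S. (b, a) \<in> r\<^sup>*}"
  proof
    assume "c \<in> {b \<in> S. (b, a) \<in> r\<^sup>*}"
    then have "(c, a) \<in> r\<^sup>*" by blast
    then have "(c, c) \<in> r\<^sup>+" using assms(2) by (rule rtrancl_into_trancl1)
    then show False using assms(1) unfolding acyclic_def by blast
  qed
  moreover have "c \<in> {b \<in> S. (b, c) \<in> r\<^sup>*}" using assms(3) by blast
  ultimately show ?thesis by blast
qed

context
  fixes elts :: "'u \<Rightarrow> 'u set" and \<phi> :: "'v lit list"
    and M Mb :: "'v \<Rightarrow> 'u" and t s :: 'u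
  assumes su: "set_universe elts"
begin

abbreviation "V \<equiv> Vseq elts \<phi> M Mb t"
abbreviation "Ms \<equiv> Mseq elts \<phi> M Mb t s"
abbreviation "R \<equiv> {(a, b). a \<in> elts b}"

lemma wfR: "wf R" using su unfolding set_universe_def by blast
lemma injE: "inj elts" using su unfolding set_universe_def by blast

lemma struct:
  assumes v: "v \<in> Vars \<phi>"
  shows "elts (Ms k v) = elts (M v) \<union> (if v \<in> V 0 then {s} else {}) \<union>
     {Ms j u | j u. j < k \<and> u \<in> V j \<and> M u \<in> elts (M v)}"
proof (induction k)
  case 0
  show ?case using mkset_elts[OF su, of "{s}" "M v"] by auto
next
  case (Suc k)
  define A where "A = {Ms k u | u. u \<in> V k \<and> M u \<in> elts (M v)}"
  have finA: "finite A"
  proof -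
    have "A \<subseteq> Ms k ` Vars \<phi>" unfolding A_def using V_sub[of elts \<phi> M Mb t] by blast
    then show ?thesis using finite_Vars finite_subset by blast
  qed
  have split: "{Ms j u | j u. j < Suc k \<and> u \<in> V j \<and> M u \<in> elts (M v)} =
     {Ms j u | j u. j < k \<and> u \<in> V j \<and> M u \<in> elts (M v)} \<union> A"
    unfolding A_def using less_Suc_eq by auto
  show ?case
  proof (cases "v \<in> V (Suc k)")
    case True
    then have "Ms (Suc k) v = mkset elts (elts (Ms k v) \<union> A)" unfolding A_def by simp
    then have "elts (Ms (Suc k) v) = elts (Ms k v) \<union> A" using mkset_elts[OF su finA] by simp
    then show ?thesis using Suc split by auto
  next
    case False
    then have "A = {}" unfolding A_def using v by auto
    moreover have "Ms (Suc k) v = Ms k v" using False by (simp only: Mseq.simps if_False)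
    ultimately show ?thesis using Suc split by auto
  qed
qed

lemma high:
  "u \<in> V j \<Longrightarrow> (s, Ms j u) \<in> R\<^sup>+"
proof (induction j arbitrary: u)
  case 0
  then have "u \<in> Vars \<phi>" using V_sub[of elts \<phi> M Mb t] by blast
  then have "s \<in> elts (Ms 0 u)" using struct[of u 0] 0 by auto
  then show ?case by auto
next
  case (Suc j)
  then have u: "u \<in> Vars \<phi>" using V_sub[of elts \<phi> M Mb t] by blast
  from Suc(2) obtain w where w: "w \<in> V j" "M w \<in> elts (M u)" by auto
  then have "Ms j w \<in> elts (Ms (Suc j) u)" using struct[OF u, of "Suc j"] by blast
  moreover have "(s, Ms j w) \<in> R\<^sup>+" using Suc(1) w by blast
  ultimately show ?case by (meson CollectI case_prodI trancl.trancl_into_trancl)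
qed

lemma s_not_high: "(s, s) \<notin> R\<^sup>+"
  using wf_acyclic[OF wfR] unfolding acyclic_def by simp

lemma low:
  assumes "rank_lt elts (M v) s" "e \<in> elts (M v)"
  shows "(s, e) \<notin> R\<^sup>+ \<and> e \<noteq> s"
proof
  have le: "rank_le elts e (M v)" using assms(2) by (rule rank_le_mem[OF wfR])
  show "(s, e) \<notin> R\<^sup>+"
  proof
    assume "(s, e) \<in> R\<^sup>+"
    then have "rank_le elts s e" by (rule trancl_rank_le[OF wfR])
    then have "rank_le elts s (M v)" using le by (rule rank_le_trans)
    then show False using assms(1) unfolding rank_lt_def by blast
  qed
  show "e \<noteq> s" using le assms(1) unfolding rank_lt_def by auto
qed

lemma recover:
  assumes rk: "\<forall>v \<in> Vars \<phi>. rank_lt elts (M v) s" and u: "u \<in> V j"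
  shows "elts (M u) = {e \<in> elts (Ms j u). (s, e) \<notin> R\<^sup>+ \<and> e \<noteq> s}"
proof -
  have uv: "u \<in> Vars \<phi>" using u V_sub[of elts \<phi> M Mb t] by blast
  have hi: "\<And>j u. u \<in> V j \<Longrightarrow> (s, Ms j u) \<in> R\<^sup>+" by (rule high)
  show ?thesis using struct[OF uv, of j] low[of u] rk uv hi by auto
qed

lemma inj_rep:
  assumes rk: "\<forall>v \<in> Vars \<phi>. rank_lt elts (M v) s"
    and "u \<in> V j" "u' \<in> V j'" "Ms j u = Ms j' u'"
  shows "M u = M u'"
proof -
  have "elts (M u) = elts (M u')" using recover[OF rk assms(2)] recover[OF rk assms(3)] assms(4)
    by simp
  then show ?thesis using injE by (simp add: inj_eq)
qed

lemma Vbound: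
  "u \<in> V n \<Longrightarrow> n < card {b \<in> M ` Vars \<phi>. (b, M u) \<in> R\<^sup>*}"
proof (induction n arbitrary: u)
  case 0
  then have "u \<in> Vars \<phi>" using V_sub[of elts \<phi> M Mb t] by blast
  then have "M u \<in> {b \<in> M ` Vars \<phi>. (b, M u) \<in> R\<^sup>*}" by blast
  moreover have "finite {b \<in> M ` Vars \<phi>. (b, M u) \<in> R\<^sup>*}"
    by (rule finite_subset[OF _ finite_imageI[OF finite_Vars]]) blast
  ultimately show ?case using card_gt_0_iff by blast
next
  case (Suc n)
  then have u: "u \<in> Vars \<phi>" using V_sub[of elts \<phi> M Mb t] by blast
  from Suc(2) obtain w where w: "w \<in> V n" "M w \<in> elts (M u)" by auto
  have "{b \<in> M ` Vars \<phi>. (b, M w) \<in> R\<^sup>*} \<subset> {b \<in> M ` Vars \<phi>. (b, M u) \<in> R\<^sup>*}"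
    by (rule below_psubset) (use wf_acyclic[OF wfR] w u in auto)
  moreover have "finite {b \<in> M ` Vars \<phi>. (b, M u) \<in> R\<^sup>*}"
    by (rule finite_subset[OF _ finite_imageI[OF finite_Vars]]) blast
  ultimately have "card {b \<in> M ` Vars \<phi>. (b, M w) \<in> R\<^sup>*} < card {b \<in> M ` Vars \<phi>. (b, M u) \<in> R\<^sup>*}"
    by (rule psubset_card_mono[rotated])
  then show ?case using Suc(1)[OF w(1)] by linarith
qed

lemma V_empty: "V (card (Vars \<phi>)) = {}"
proof -
  { fix u assume "u \<in> V (card (Vars \<phi>))"
    then have "card (Vars \<phi>) < card {b \<in> M ` Vars \<phi>. (b, M u) \<in> R\<^sup>*}" by (rule Vbound)
    moreover have "card {b \<in> M ` Vars \<phi>. (b, M u) \<in> R\<^sup>*} \<le> card (M ` Vars \<phi>)"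
      using finite_Vars by (intro card_mono) auto
    moreover have "card (M ` Vars \<phi>) \<le> card (Vars \<phi>)" using finite_Vars by (rule card_image_le)
    ultimately have False by simp }
  then show ?thesis by blast
qed

lemma stable:
  "(\<forall>j. k < j \<and> j \<le> k + d \<longrightarrow> x \<notin> V j) \<Longrightarrow> Ms (k + d) x = Ms k x"
proof (induction d)
  case 0 then show ?case by simp
next
  case (Suc d)
  have "k < Suc (k + d) \<and> Suc (k + d) \<le> k + Suc d" by simp
  then have "x \<notin> V (Suc (k + d))" using Suc.prems by blast
  then have "Ms (Suc (k + d)) x = Ms (k + d) x" by (simp only: Mseq.simps if_False)
  moreover have "\<forall>j. k < j \<and> j \<le> k + d \<longrightarrow> x \<notin> V j" using Suc.prems by (metis add_Suc_right le_SucI)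
  ultimately show ?case using Suc.IH by simp
qed

lemma struct_mem:
  assumes v: "v \<in> Vars \<phi>"
  shows "e \<in> elts (Ms k v) \<longleftrightarrow> e \<in> elts (M v) \<or> (v \<in> V 0 \<and> e = s) \<or>
    (\<exists>j u. j < k \<and> u \<in> V j \<and> M u \<in> elts (M v) \<and> e = Ms j u)"
  unfolding struct[OF v, of k] by auto

lemma s_iff:
  assumes rk: "\<forall>v \<in> Vars \<phi>. rank_lt elts (M v) s" and v: "v \<in> Vars \<phi>"
  shows "s \<in> elts (Ms k v) \<longleftrightarrow> t \<in> elts (Mb v)"
proof -
  have a: "s \<notin> elts (M v)" using low[of v s] rk v by blast
  have b: "s \<noteq> Ms j u" if "u \<in> V j" for j u
    using high[OF that] s_not_high by metis
  have c: "v \<in> V 0 \<longleftrightarrow> t \<in> elts (Mb v)" using v by simp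
  show ?thesis unfolding struct_mem[OF v] using a b c by blast
qed

lemma C_iff:
  assumes rk: "\<forall>v \<in> Vars \<phi>. rank_lt elts (M v) s" and v: "v \<in> Vars \<phi>"
    and j0: "j0 < k" "u0 \<in> V j0"
  shows "Ms j0 u0 \<in> elts (Ms k v) \<longleftrightarrow> M u0 \<in> elts (M v)"
proof -
  have h: "(s, Ms j0 u0) \<in> R\<^sup>+" using high[OF j0(2)] .
  have a: "Ms j0 u0 \<notin> elts (M v)" using low[of v "Ms j0 u0"] rk v h by blast
  have b: "Ms j0 u0 \<noteq> s" using h s_not_high by metis
  have c: "(\<exists>j u. Ms j0 u0 = Ms j u \<and> j < k \<and> u \<in> V j \<and> M u \<in> elts (M v)) \<longleftrightarrow> M u0 \<in> elts (M v)"
  proof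
    assume "\<exists>j u. Ms j0 u0 = Ms j u \<and> j < k \<and> u \<in> V j \<and> M u \<in> elts (M v)"
    then obtain j u where "Ms j0 u0 = Ms j u" "u \<in> V j" "M u \<in> elts (M v)" by blast
    then show "M u0 \<in> elts (M v)" using inj_rep[OF rk j0(2)] by metis
  next
    assume "M u0 \<in> elts (M v)"
    then show "\<exists>j u. Ms j0 u0 = Ms j u \<and> j < k \<and> u \<in> V j \<and> M u \<in> elts (M v)"
      using j0 by blast
  qed
  show ?thesis unfolding struct_mem[OF v] using a b c by blast
qed

lemma low_iff:
  assumes v: "v \<in> Vars \<phi>" and "e \<noteq> s" "\<not> (\<exists>j u. j < k \<and> u \<in> V j \<and> e = Ms j u)"
  shows "e \<in> elts (Ms k v) \<longleftrightarrow> e \<in> elts (M v)"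
  unfolding struct_mem[OF v] using assms(2,3) by blast

lemma diff_case:
  assumes rk: "\<forall>v \<in> Vars \<phi>. rank_lt elts (M v) s"
    and vs: "x \<in> Vars \<phi>" "y \<in> Vars \<phi>" "z \<in> Vars \<phi>"
    and m: "elts (M x) = elts (M y) - elts (M z)"
    and mb: "elts (Mb x) = elts (Mb y) - elts (Mb z)"
  shows "elts (Ms k x) = elts (Ms k y) - elts (Ms k z)"
proof (rule set_eqI)
  fix e
  show "e \<in> elts (Ms k x) \<longleftrightarrow> e \<in> elts (Ms k y) - elts (Ms k z)"
  proof (cases "e = s")
    case True
    then show ?thesis using s_iff[OF rk] vs mb by auto
  next
    case False
    show ?thesis
    proof (cases "\<exists>j u. j < k \<and> u \<in> V j \<and> e = Ms j u")
      case True
      then obtain j u where ju: "j < k" "u \<in> V j" "e = Ms j u" by blast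
      show ?thesis using C_iff[OF rk _ ju(1,2)] vs m ju(3) by auto
    next
      case nc: False
      show ?thesis using low_iff[OF _ False nc] vs m by auto
    qed
  qed
qed

lemma mem_case:
  assumes rk: "\<forall>v \<in> Vars \<phi>. rank_lt elts (M v) s"
    and vs: "x \<in> Vars \<phi>" "y \<in> Vars \<phi>" and m: "M x \<in> elts (M y)"
  shows "Ms (card (Vars \<phi>)) x \<in> elts (Ms (card (Vars \<phi>)) y)"
proof -
  define N where "N = card (Vars \<phi>)"
  have VN: "V N = {}" unfolding N_def by (rule V_empty)
  have Npos: "0 < N" unfolding N_def using vs(1) finite_Vars[of \<phi>] card_gt_0_iff by blast
  show ?thesis unfolding N_def[symmetric]
  proof (cases "\<exists>j<N. x \<in> V j")
    case True
    define k where "k = Max {j. j < N \<and> x \<in> V j}"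
    have fin: "finite {j. j < N \<and> x \<in> V j}" by (rule finite_subset[of _ "{..<N}"]) auto
    have ne: "{j. j < N \<and> x \<in> V j} \<noteq> {}" using True by blast
    have k: "k < N" "x \<in> V k" using Max_in[OF fin ne] unfolding k_def by blast+
    have above: "\<forall>j. k < j \<and> j \<le> k + (N - k) \<longrightarrow> x \<notin> V j"
    proof (intro allI impI)
      fix j assume j: "k < j \<and> j \<le> k + (N - k)"
      show "x \<notin> V j"
      proof
        assume xj: "x \<in> V j"
        show False
        proof (cases "j < N")
          case True
          then have "j \<le> k" unfolding k_def using Max_ge[OF fin] xj by blast
          then show False using j by simp
        next
          case False
          then have "j = N" using j k by simp
          then show False using xj VN by simp
        qed
      qed
    qed
    have "Ms (k + (N - k)) x = Ms k x" using above by (rule stable)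
    then have eq: "Ms N x = Ms k x" using k by simp
    have "Ms k x \<in> {Ms j u | j u. j < N \<and> u \<in> V j \<and> M u \<in> elts (M y)}"
      using k m by blast
    then show "Ms N x \<in> elts (Ms N y)" unfolding eq struct[OF vs(2), of N] by blast
  next
    case False
    have above: "\<forall>j. 0 < j \<and> j \<le> 0 + N \<longrightarrow> x \<notin> V j"
    proof (intro allI impI)
      fix j assume j: "0 < j \<and> j \<le> 0 + N"
      show "x \<notin> V j"
      proof (cases "j < N")
        case True then show ?thesis using False by blast
      next
        case False then have "j = N" using j by simp
        then show ?thesis using VN by simp
      qed
    qed
    have "Ms (0 + N) x = Ms 0 x" using above by (rule stable)
    moreover have "x \<notin> V 0" using False Npos by blast
    moreover have "Ms 0 x = M x" using \<open>x \<notin> V 0\<close> by (simp only: Mseq.simps if_False)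
    ultimately have eq: "Ms N x = M x" by simp
    show "Ms N x \<in> elts (Ms N y)" unfolding eq struct[OF vs(2), of N] using m by blast
  qed
qed

end

theorem lemma10:
  fixes elts :: "'u \<Rightarrow> 'u set" and \<phi> :: "'v lit list"
    and M Mb :: "'v \<Rightarrow> 'u" and xb yb :: 'v and t s :: 'u
  assumes "set_universe elts"
    and "sat elts M \<phi>"
    and "xb \<in> Vars \<phi>" and "yb \<in> Vars \<phi>"
    and "sat elts Mb \<phi>" and "Mb xb \<noteq> Mb yb"
    and "(t \<in> elts (Mb xb)) \<noteq> (t \<in> elts (Mb yb))"
    and "\<forall>v \<in> Vars \<phi>. rank_lt elts (M v) s"
  shows "sat elts (Mseq elts \<phi> M Mb t s (card (Vars \<phi>))) \<phi>"
  unfolding sat_def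
proof
  fix l assume l: "l \<in> set \<phi>"
  then have lv: "lit_vars l \<subseteq> Vars \<phi>" unfolding Vars_def by blast
  have lM: "lit_sat elts M l" using assms(2) l unfolding sat_def by blast
  have lMb: "lit_sat elts Mb l" using assms(5) l unfolding sat_def by blast
  show "lit_sat elts (Mseq elts \<phi> M Mb t s (card (Vars \<phi>))) l"
  proof (cases l)
    case (Mem x y)
    then show ?thesis using mem_case[OF assms(1) assms(8), of x y] lv lM by simp
  next
    case (Diff x y z)
    then show ?thesis using diff_case[OF assms(1) assms(8), of x y z] lv lM lMb by simp
  qed
qed

end
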